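(* Let $H$ be a real-valued harmonic function in $\mathbb{D}=\{|z|<1\}$ and let $u(z)=H(z)+\frac12(1-|z|^{2})\big(zH_z(z)+\overline{z}H_{\overline{z}}(z)\big)$ for $z\in\mathbb{D}$. Suppose $u\in C^{1}(\overline{\mathbb{D}})$ and $M\in\mathbb{R}$ is such that $u\le M$ on $\mathbb{T}=\{|z|=1\}$. Then $u\le M$ on $\mathbb{D}$.
   Context: $\overline{\mathbb{D}}$ is the closed unit disk; $u\in C^1(\overline{\mathbb{D}})$ means $u$ extends to a $C^1$ function on $\overline{\mathbb{D}}$, and $u$ on $\mathbb{T}$ refers to these boundary values. Note $zH_z+\overline zH_{\overline z}=r\,\partial H/\partial r$ for $z=re^{i\theta}$. *)

theory Defs
  imports "HOL-Analysis.Analysis"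
begin

definition harmonic_on :: "(complex \<Rightarrow> real) \<Rightarrow> complex set \<Rightarrow> bool" where
  "harmonic_on H S \<longleftrightarrow> open S \<and>
     (\<exists>Hx Hy Hxx Hxy Hyx Hyy.
        (\<forall>z\<in>S. (H has_derivative (\<lambda>h. Re h * Hx z + Im h * Hy z)) (at z)
              \<and> (Hx has_derivative (\<lambda>h. Re h * Hxx z + Im h * Hxy z)) (at z)
              \<and> (Hy has_derivative (\<lambda>h. Re h * Hyx z + Im h * Hyy z)) (at z)
              \<and> Hxx z + Hyy z = 0)
        \<and> continuous_on S Hxx \<and> continuous_on S Hxy
        \<and> continuous_on S Hyx \<and> continuous_on S Hyy)"

text \<open>z H_z + conj z H_{conj z} = r dH/dr = DH(z)(z), the Frechet derivative applied to z.\<close>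
definition u_of :: "(complex \<Rightarrow> real) \<Rightarrow> complex \<Rightarrow> real" where
  "u_of H z = H z + (1/2) * (1 - (cmod z)^2) * frechet_derivative H (at z) z"

definition C1_closed_disk :: "(complex \<Rightarrow> real) \<Rightarrow> (complex \<Rightarrow> real) \<Rightarrow> bool" where
  "C1_closed_disk f U \<longleftrightarrow> (\<forall>z\<in>ball 0 1. U z = f z) \<and>
     (\<exists>U' :: complex \<Rightarrow> complex \<Rightarrow>\<^sub>L real.
        (\<forall>z\<in>cball 0 1. (U has_derivative blinfun_apply (U' z)) (at z within cball 0 1))
        \<and> continuous_on (cball 0 1) U')"

end

theory Submission imports Defs "HOL-Complex_Analysis.Complex_Analysis" begin

lemma line_deriv:
  assumes "(G has_derivative (\<lambda>h. Re h * a + Im h * b)) (at (z + of_real s * v))"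
  shows "((\<lambda>s. G (z + of_real s * v)) has_real_derivative (Re v * a + Im v * b)) (at s)"
proof -
  have 1: "((\<lambda>s. z + of_real s * v) has_derivative (\<lambda>h. of_real h * v)) (at s)"
    by (auto intro!: derivative_eq_intros)
  have "((G \<circ> (\<lambda>s. z + of_real s * v)) has_derivative ((\<lambda>h. Re h * a + Im h * b) \<circ> (\<lambda>h. of_real h * v))) (at s)"
    by (rule diff_chain_at[OF 1]) (use assms in simp)
  moreover have "((\<lambda>h. Re h * a + Im h * b) \<circ> (\<lambda>h. of_real h * v)) = (*) (Re v * a + Im v * b)"
    by (auto simp: fun_eq_iff algebra_simps)
  ultimately show ?thesis unfolding has_field_derivative_def by (simp add: o_def)
qed

lemma mixed_sym:
  assumes S: "open S" "z \<in> S"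
  and Hd: "\<And>w. w\<in>S \<Longrightarrow> (H has_derivative (\<lambda>h. Re h * Hx w + Im h * Hy w)) (at w)"
  and Hxd: "\<And>w. w\<in>S \<Longrightarrow> (Hx has_derivative (\<lambda>h. Re h * Hxx w + Im h * Hxy w)) (at w)"
  and Hyd: "\<And>w. w\<in>S \<Longrightarrow> (Hy has_derivative (\<lambda>h. Re h * Hyx w + Im h * Hyy w)) (at w)"
  and c1: "continuous_on S Hxy" and c2: "continuous_on S Hyx"
  shows "Hxy z = (Hyx z :: real)"
proof -
  obtain r where r: "r > 0" "ball z r \<subseteq> S" using S openE by blast
  define P where "P s q = z + of_real s + \<i> * of_real q" for s q :: real
  have Pdist: "dist (P s q) z \<le> 2*t" if "0 \<le> s" "s \<le> t" "0 \<le> q" "q \<le> t" for s q t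
  proof -
    have "cmod (of_real s + \<i> * of_real q) \<le> cmod (of_real s) + cmod (\<i> * of_real q)"
      by (rule norm_triangle_ineq)
    also have "\<dots> \<le> 2*t" using that by (simp add: norm_mult)
    finally show ?thesis by (simp add: P_def dist_norm)
  qed
  have Pin: "P s q \<in> S" if "0 \<le> s" "s \<le> t" "0 \<le> q" "q \<le> t" "2*t < r" for s q t
  proof -
    have "dist z (P s q) < r" using Pdist[OF that(1-4)] that(5) by (simp add: dist_commute)
    then show ?thesis using r by auto
  qed
  have dx: "((\<lambda>s. G (P s q)) has_real_derivative Gx (P s q)) (at s)"
    if "(G has_derivative (\<lambda>h. Re h * Gx (P s q) + Im h * Gy (P s q))) (at (P s q))" for G Gx Gy s q
  proof -
    have e: "\<And>s. P s q = (z + \<i> * of_real q) + of_real s * 1" by (simp add: P_def)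
    show ?thesis using line_deriv[of G "Gx (P s q)" "Gy (P s q)" "z + \<i> * of_real q" s 1] that
      by (simp add: e)
  qed
  have dy: "((\<lambda>q. G (P s q)) has_real_derivative Gy (P s q)) (at q)"
    if "(G has_derivative (\<lambda>h. Re h * Gx (P s q) + Im h * Gy (P s q))) (at (P s q))" for G Gx Gy s q
  proof -
    have e: "\<And>q. P s q = (z + of_real s) + of_real q * \<i>" by (simp add: P_def algebra_simps)
    show ?thesis using line_deriv[of G "Gx (P s q)" "Gy (P s q)" "z + of_real s" q \<i>] that
      by (simp add: e)
  qed
  define D where "D t = H (P t t) - H (P t 0) - H (P 0 t) + H (P 0 0)" for t
  have key: "\<exists>w1 w2. dist w1 z \<le> 2*t \<and> dist w2 z \<le> 2*t \<and> Hxy w1 = Hyx w2" if t: "0 < t" "2*t < r" for t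
  proof -
    have "\<exists>\<xi>>0. \<xi> < t \<and> (H (P t t) - H (P t 0)) - (H (P 0 t) - H (P 0 0))
        = (t - 0) * (Hx (P \<xi> t) - Hx (P \<xi> 0))"
      by (rule MVT2) (use t in \<open>auto intro!: derivative_eq_intros dx[where Gx=Hx and Gy=Hy] Hd Pin[of _ t]\<close>)
    then obtain \<xi> where xi: "0 < \<xi>" "\<xi> < t" and D1: "D t = t * (Hx (P \<xi> t) - Hx (P \<xi> 0))"
      by (auto simp: D_def)
    have "\<exists>\<eta>>0. \<eta> < t \<and> Hx (P \<xi> t) - Hx (P \<xi> 0) = (t - 0) * Hxy (P \<xi> \<eta>)"
      by (rule MVT2) (use t xi in \<open>auto intro!: dy[where Gx=Hxx and Gy=Hxy] Hxd Pin[of _ t]\<close>)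
    then obtain \<eta> where eta: "0 < \<eta>" "\<eta> < t" and D2: "Hx (P \<xi> t) - Hx (P \<xi> 0) = t * Hxy (P \<xi> \<eta>)"
      by auto
    have "\<exists>\<eta>>0. \<eta> < t \<and> (H (P t t) - H (P 0 t)) - (H (P t 0) - H (P 0 0))
        = (t - 0) * (Hy (P t \<eta>) - Hy (P 0 \<eta>))"
      by (rule MVT2) (use t in \<open>auto intro!: derivative_eq_intros dy[where Gx=Hx and Gy=Hy] Hd Pin[of _ t]\<close>)
    then obtain \<eta>' where eta': "0 < \<eta>'" "\<eta>' < t" and D3: "D t = t * (Hy (P t \<eta>') - Hy (P 0 \<eta>'))"
      by (auto simp: D_def algebra_simps)
    have "\<exists>\<xi>>0. \<xi> < t \<and> Hy (P t \<eta>') - Hy (P 0 \<eta>') = (t - 0) * Hyx (P \<xi> \<eta>')"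
      by (rule MVT2) (use t eta' in \<open>auto intro!: dx[where Gx=Hyx and Gy=Hyy] Hyd Pin[of _ t]\<close>)
    then obtain \<xi>' where xi': "0 < \<xi>'" "\<xi>' < t" and D4: "Hy (P t \<eta>') - Hy (P 0 \<eta>') = t * Hyx (P \<xi>' \<eta>')"
      by auto
    have "t * t * Hxy (P \<xi> \<eta>) = t * t * Hyx (P \<xi>' \<eta>')"
      using D1 D2 D3 D4 by (simp add: algebra_simps) metis
    then have "Hxy (P \<xi> \<eta>) = Hyx (P \<xi>' \<eta>')" using t by simp
    moreover have "dist (P \<xi> \<eta>) z \<le> 2*t" "dist (P \<xi>' \<eta>') z \<le> 2*t"
      using xi eta xi' eta' by (auto intro!: Pdist)
    ultimately show ?thesis by blast
  qed
  show ?thesis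
  proof (rule ccontr)
    assume ne: "Hxy z \<noteq> Hyx z"
    define e where "e = \<bar>Hxy z - Hyx z\<bar> / 2"
    have e: "e > 0" using ne by (simp add: e_def)
    obtain d1 where d1: "d1 > 0" "\<And>w. w \<in> S \<Longrightarrow> dist w z < d1 \<Longrightarrow> dist (Hxy w) (Hxy z) < e"
      using c1 S e unfolding continuous_on_iff by metis
    obtain d2 where d2: "d2 > 0" "\<And>w. w \<in> S \<Longrightarrow> dist w z < d2 \<Longrightarrow> dist (Hyx w) (Hyx z) < e"
      using c2 S e unfolding continuous_on_iff by metis
    define t where "t = min r (min d1 d2) / 4"
    have t: "0 < t" "2*t < r" "2*t < d1" "2*t < d2" using r d1 d2 by (auto simp: t_def)
    obtain w1 w2 where w: "dist w1 z \<le> 2*t" "dist w2 z \<le> 2*t" "Hxy w1 = Hyx w2"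
      using key[OF t(1,2)] by blast
    have "w1 \<in> S" "w2 \<in> S" using w t r by (auto simp: dist_commute subset_iff)
    then have "dist (Hxy w1) (Hxy z) < e" "dist (Hyx w2) (Hyx z) < e"
      using d1(2)[of w1] d2(2)[of w2] w(1,2) t by auto
    then show False using w(3) by (simp add: dist_real_def e_def abs_if split: if_splits)
  qed
qed


lemma harmonic_repr:
  assumes "harmonic_on H (ball 0 1)"
  obtains F where "F holomorphic_on ball 0 1" "\<And>z. z \<in> ball 0 1 \<Longrightarrow> H z = Re (F z)"
    "\<And>z. z \<in> ball 0 1 \<Longrightarrow> u_of H z = Re (F z) + (1/2) * (1 - (cmod z)^2) * Re (z * deriv F z)"
proof -
  let ?S = "ball (0::complex) 1"
  obtain Hx Hy Hxx Hxy Hyx Hyy where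
    D: "\<And>z. z\<in>?S \<Longrightarrow> (H has_derivative (\<lambda>h. Re h * Hx z + Im h * Hy z)) (at z)
              \<and> (Hx has_derivative (\<lambda>h. Re h * Hxx z + Im h * Hxy z)) (at z)
              \<and> (Hy has_derivative (\<lambda>h. Re h * Hyx z + Im h * Hyy z)) (at z)
              \<and> Hxx z + Hyy z = 0"
    and c: "continuous_on ?S Hxx" "continuous_on ?S Hxy" "continuous_on ?S Hyx" "continuous_on ?S Hyy"
    using assms unfolding harmonic_on_def by blast
  have sym: "Hxy z = Hyx z" if "z \<in> ?S" for z
    by (rule mixed_sym[of ?S z H Hx Hy Hxx Hxy Hyx Hyy]) (use that D c in auto)
  define f where "f z = complex_of_real (Hx z) - \<i> * complex_of_real (Hy z)" for z
  have fd: "(f has_field_derivative (of_real (Hxx z) - \<i> * of_real (Hyx z))) (at z)" if z: "z \<in> ?S" for z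
  proof -
    have "(f has_derivative (\<lambda>h. of_real (Re h * Hxx z + Im h * Hxy z) - \<i> * of_real (Re h * Hyx z + Im h * Hyy z))) (at z)"
      unfolding f_def using D[OF z]
      by (auto intro!: derivative_eq_intros bounded_linear.has_derivative[OF bounded_linear_of_real])
    moreover have "(\<lambda>h. of_real (Re h * Hxx z + Im h * Hxy z) - \<i> * of_real (Re h * Hyx z + Im h * Hyy z))
       = (*) (of_real (Hxx z) - \<i> * of_real (Hyx z))"
    proof -
      have hyy: "Hyy z = - Hxx z" using D[OF z] by linarith
      show ?thesis using sym[OF z] hyy by (auto simp: fun_eq_iff complex_eq_iff algebra_simps)
    qed
    ultimately show ?thesis unfolding has_field_derivative_def by simp
  qed
  have holf: "f holomorphic_on ?S"
    unfolding holomorphic_on_open[OF open_ball] by (metis fd)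
  obtain F0 where F0: "\<And>x. x \<in> ?S \<Longrightarrow> (F0 has_field_derivative f x) (at x within ?S)"
    by (rule holomorphic_convex_primitive'[OF convex_ball open_ball holf]) (rule that)
  have F0': "(F0 has_field_derivative f x) (at x)" if "x \<in> ?S" for x
    using F0[OF that] by (simp only: at_within_open[OF that open_ball])
  have "\<exists>c. \<forall>x\<in>?S. H x - Re (F0 x) = c"
  proof (rule has_derivative_zero_constant[OF convex_ball])
    fix x assume x: "x \<in> ?S"
    have "((\<lambda>x. H x - Re (F0 x)) has_derivative (\<lambda>h. (Re h * Hx x + Im h * Hy x) - Re (f x * h))) (at x)"
    proof -
      have h1: "(H has_derivative (\<lambda>h. Re h * Hx x + Im h * Hy x)) (at x)" using D[OF x] by blast
      have h2: "((\<lambda>x. Re (F0 x)) has_derivative (\<lambda>h. Re (f x * h))) (at x)"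
        using has_derivative_Re[OF F0'[OF x, unfolded has_field_derivative_def]] by simp
      show ?thesis by (rule has_derivative_diff[OF h1 h2])
    qed
    moreover have "(\<lambda>h. (Re h * Hx x + Im h * Hy x) - Re (f x * h)) = (\<lambda>h. 0)"
      by (simp add: fun_eq_iff f_def algebra_simps)
    ultimately have "((\<lambda>x. H x - Re (F0 x)) has_derivative (\<lambda>h. 0)) (at x)"
      by (simp only:)
    then show "((\<lambda>x. H x - Re (F0 x)) has_derivative (\<lambda>h. 0)) (at x within ?S)"
      by (rule has_derivative_at_withinI)
  qed
  then obtain c where c0: "\<And>x. x \<in> ?S \<Longrightarrow> H x - Re (F0 x) = c" by blast
  define F where "F z = F0 z + of_real c" for z
  have Fd: "(F has_field_derivative f x) (at x)" if "x \<in> ?S" for x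
    unfolding F_def using F0'[OF that] by (auto intro!: derivative_eq_intros)
  show ?thesis
  proof
    show "F holomorphic_on ?S" unfolding holomorphic_on_open[OF open_ball] by (metis Fd)
    show HF: "H z = Re (F z)" if "z \<in> ?S" for z using c0[OF that] by (simp add: F_def)
    show "u_of H z = Re (F z) + (1/2) * (1 - (cmod z)^2) * Re (z * deriv F z)" if z: "z \<in> ?S" for z
    proof -
      have "frechet_derivative H (at z) = (\<lambda>h. Re h * Hx z + Im h * Hy z)"
      proof -
        have "(H has_derivative (\<lambda>h. Re h * Hx z + Im h * Hy z)) (at z)" using D[OF z] by blast
        from frechet_derivative_at[OF this] show ?thesis by simp
      qed
      moreover have "deriv F z = f z" using Fd[OF z] by (rule DERIV_imp_deriv)
      then have "Re (z * deriv F z) = Re z * Hx z + Im z * Hy z" by (simp add: f_def)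
      ultimately show ?thesis using HF[OF z] by (simp add: u_of_def)
    qed
  qed
qed

lemma second_deriv_test:
  fixes g g' :: "real \<Rightarrow> real"
  assumes d: "d > 0" and gd: "\<And>x. \<bar>x\<bar> < d \<Longrightarrow> (g has_real_derivative g' x) (at x)"
   and g'd: "(g' has_real_derivative l) (at 0)" and mx: "\<And>x. \<bar>x\<bar> < d \<Longrightarrow> g x \<le> g 0"
  shows "g' 0 = 0 \<and> l \<le> 0"
proof -
  have g0: "g' 0 = 0"
    by (rule DERIV_local_max[OF gd[of 0] d]) (use d mx in auto)
  have "l \<le> 0"
  proof (rule ccontr)
    assume "\<not> l \<le> 0"
    then have "l > 0" by simp
    from DERIV_pos_inc_right[OF g'd this] obtain d' where d': "d' > 0" "\<And>h. h > 0 \<Longrightarrow> h < d' \<Longrightarrow> g' 0 < g' (0 + h)"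
      by blast
    define h where "h = min d d' / 2"
    have h: "0 < h" "h < d" "h < d'" using d d' by (auto simp: h_def)
    have "\<exists>\<xi>>0. \<xi> < h \<and> g h - g 0 = (h - 0) * g' \<xi>"
      by (rule MVT2) (use h in \<open>auto intro!: gd\<close>)
    then obtain \<xi> where xi: "0 < \<xi>" "\<xi> < h" "g h - g 0 = h * g' \<xi>" by auto
    have "g' \<xi> > 0" using d'(2)[of \<xi>] xi h g0 by simp
    then have "g h > g 0" using xi h by (simp add: algebra_simps)
    moreover have "g h \<le> g 0" using mx[of h] h by simp
    ultimately show False by simp
  qed
  with g0 show ?thesis by simp
qed

lemma re_line_deriv:
  assumes "(F has_field_derivative d) (at (a + of_real s * v))"
  shows "((\<lambda>s. Re (F (a + of_real s * v))) has_real_derivative Re (d * v)) (at s)"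
proof -
  have 1: "((\<lambda>s. a + of_real s * v) has_derivative (\<lambda>h. of_real h * v)) (at s)"
    by (auto intro!: derivative_eq_intros)
  have "((F \<circ> (\<lambda>s. a + of_real s * v)) has_derivative ((\<lambda>h. d * h) \<circ> (\<lambda>h. of_real h * v))) (at s)"
    by (rule diff_chain_at[OF 1]) (use assms in \<open>simp add: has_field_derivative_def\<close>)
  then have "((\<lambda>s. Re ((F \<circ> (\<lambda>s. a + of_real s * v)) s)) has_derivative (\<lambda>h. Re (((\<lambda>h. d * h) \<circ> (\<lambda>h. of_real h * v)) h))) (at s)"
    by (rule has_derivative_Re)
  moreover have "(\<lambda>h. Re (((\<lambda>h. d * h) \<circ> (\<lambda>h. of_real h * v)) h)) = (*) (Re (d * v))"
    by (auto simp: fun_eq_iff algebra_simps)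
  ultimately show ?thesis unfolding has_field_derivative_def by (simp add: o_def)
qed

lemma ray_bound:
  assumes Fd: "\<And>w. w \<in> ball 0 1 \<Longrightarrow> (F has_field_derivative f w) (at w)"
  and ub: "\<And>w. w \<in> ball 0 1 \<Longrightarrow> Re (F w) + (1/2) * (1 - (cmod w)^2) * Re (w * f w) \<le> m"
  and z: "z \<in> ball 0 1"
  shows "Re (F z) \<le> m"
proof -
  define \<rho> where "\<rho> = (cmod z)^2"
  have \<rho>: "0 \<le> \<rho>" "\<rho> < 1" using z by (auto simp: \<rho>_def power_less_one_iff)
  define q where "q s = Re (F (of_real s * z))" for s :: real
  define q' where "q' s = Re (f (of_real s * z) * z)" for s :: real
  have inb: "of_real s * z \<in> ball 0 1" if "\<bar>s\<bar> \<le> 1" for s :: real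
  proof -
    have "cmod (of_real s * z) = \<bar>s\<bar> * cmod z" by (simp add: norm_mult)
    also have "\<dots> \<le> cmod z" by (rule mult_left_le_one_le) (use that in auto)
    also have "\<dots> < 1" using z by simp
    finally show ?thesis by simp
  qed
  have qd: "(q has_real_derivative q' s) (at s)" if "\<bar>s\<bar> \<le> 1" for s
    using re_line_deriv[of F "f (of_real s * z)" 0 s z] Fd[OF inb[OF that]]
    unfolding q_def q'_def by simp
  have pos: "0 < 1 - \<rho> * (s * s)" if "\<bar>s\<bar> \<le> 1" for s :: real
  proof -
    have "\<bar>s\<bar> * \<bar>s\<bar> \<le> 1" using that by (intro mult_le_one) auto
    moreover have "s * s = \<bar>s\<bar> * \<bar>s\<bar>" by (rule abs_mult_self_eq[symmetric])
    ultimately have "s * s \<le> 1" by linarith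
    then have "\<rho> * (s * s) \<le> \<rho>" using \<rho> by (simp add: mult_right_le_one_le)
    then show ?thesis using \<rho> by simp
  qed
  define \<psi> where "\<psi> s = ((q s - m) * (s * s)) / (1 - \<rho> * (s * s))" for s
  have vle: "q s + (1/2) * (1 - \<rho> * (s * s)) * (s * q' s) \<le> m" if "\<bar>s\<bar> \<le> 1" for s
  proof -
    have "Re (F (of_real s * z)) + (1/2) * (1 - (cmod (of_real s * z))^2) * Re ((of_real s * z) * f (of_real s * z)) \<le> m"
      by (rule ub[OF inb[OF that]])
    moreover have "(cmod (of_real s * z))^2 = \<rho> * (s * s)" by (simp add: norm_mult \<rho>_def power_mult_distrib power2_eq_square)
    moreover have "Re ((of_real s * z) * f (of_real s * z)) = s * q' s" by (simp add: q'_def algebra_simps)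
    ultimately show ?thesis by (simp add: q_def)
  qed
  have "\<psi> 1 \<le> \<psi> 0"
  proof (rule DERIV_nonpos_imp_nonincreasing[where f=\<psi>])
    fix s :: real assume s: "0 \<le> s" "s \<le> 1"
    then have sa: "\<bar>s\<bar> \<le> 1" by simp
    have dN: "((\<lambda>s. (q s - m) * (s * s)) has_real_derivative ((q' s - 0) * (s * s) + (1 * s + 1 * s) * (q s - m))) (at s)"
      by (rule DERIV_mult[OF DERIV_diff[OF qd[OF sa] DERIV_const] DERIV_mult[OF DERIV_ident DERIV_ident]])
    have dD: "((\<lambda>s. 1 - \<rho> * (s * s)) has_real_derivative (0 - \<rho> * (1 * s + 1 * s))) (at s)"
      by (rule DERIV_diff[OF DERIV_const DERIV_cmult[OF DERIV_mult[OF DERIV_ident DERIV_ident]]])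
    define Dn where "Dn = 1 - \<rho> * (s * s)"
    have Dn: "Dn > 0" using pos[OF sa] by (simp add: Dn_def)
    have d: "(\<psi> has_real_derivative (((q' s - 0) * (s * s) + (1 * s + 1 * s) * (q s - m)) * Dn - ((q s - m) * (s * s)) * (0 - \<rho> * (1 * s + 1 * s))) / (Dn * Dn)) (at s)"
      unfolding \<psi>_def Dn_def by (rule DERIV_divide[OF dN dD]) (use pos[OF sa] in simp)
    have eq: "(((q' s - 0) * (s * s) + (1 * s + 1 * s) * (q s - m)) * Dn - ((q s - m) * (s * s)) * (0 - \<rho> * (1 * s + 1 * s))) / (Dn * Dn)
      = 2 * s * ((q s + (1/2) * Dn * (s * q' s)) - m) / (Dn * Dn)"
      unfolding Dn_def by (simp add: algebra_simps)
    have "2 * s * ((q s + (1/2) * Dn * (s * q' s)) - m) / (Dn * Dn) \<le> 0"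
      using vle[OF sa] s Dn by (simp add: Dn_def divide_nonpos_pos mult_nonneg_nonpos)
    then show "\<exists>y. (\<psi> has_real_derivative y) (at s) \<and> y \<le> 0" using d eq by metis
  qed simp
  then have "(q 1 - m) / (1 - \<rho>) \<le> 0" by (simp add: \<psi>_def)
  then have "q 1 \<le> m" using \<rho> by (simp add: divide_le_0_iff)
  then show ?thesis by (simp add: q_def)
qed

lemma comp_exp_deriv:
  assumes "X holomorphic_on ball 0 1" "exp \<zeta> * z0 \<in> ball 0 1"
  shows "((\<lambda>\<zeta>. X (exp \<zeta> * z0)) has_field_derivative ((exp \<zeta> * z0) * deriv X (exp \<zeta> * z0))) (at \<zeta>)"
proof -
  have 1: "(X has_field_derivative deriv X (exp \<zeta> * z0)) (at (exp \<zeta> * z0))"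
    by (rule holomorphic_derivI[OF assms(1) open_ball assms(2)])
  have 2: "((\<lambda>\<zeta>. exp \<zeta> * z0) has_field_derivative exp \<zeta> * z0) (at \<zeta>)"
    by (auto intro!: derivative_eq_intros)
  from DERIV_chain2[OF 1 2] show ?thesis by (simp add: mult.commute)
qed

lemma re_real_line:
  assumes "(\<Phi> has_field_derivative d) (at (of_real x))"
  shows "((\<lambda>x. Re (\<Phi> (of_real x))) has_real_derivative Re d) (at x)"
  using re_line_deriv[of \<Phi> d 0 x 1] assms by simp

lemma re_imag_line:
  assumes "(\<Phi> has_field_derivative d) (at (\<i> * of_real y))"
  shows "((\<lambda>y. Re (\<Phi> (\<i> * of_real y))) has_real_derivative Re (d * \<i>)) (at y)"
  using re_line_deriv[of \<Phi> d 0 y \<i>] assms by (simp add: mult.commute)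

theorem lemma3:
  fixes H U :: "complex \<Rightarrow> real" and M :: real
  assumes "harmonic_on H (ball 0 1)"
    and "C1_closed_disk (u_of H) U"
    and "\<forall>z\<in>sphere 0 1. U z \<le> M"
  shows "\<forall>z\<in>ball 0 1. u_of H z \<le> M"
proof -
  let ?S = "ball (0::complex) 1"
  obtain F where hF: "F holomorphic_on ?S" and HF: "\<And>z. z \<in> ?S \<Longrightarrow> H z = Re (F z)"
    and uF: "\<And>z. z \<in> ?S \<Longrightarrow> u_of H z = Re (F z) + (1/2) * (1 - (cmod z)^2) * Re (z * deriv F z)"
    by (rule harmonic_repr[OF assms(1)]) (rule that)
  have Ueq: "\<And>z. z \<in> ?S \<Longrightarrow> U z = u_of H z" using assms(2) unfolding C1_closed_disk_def by blast
  obtain U' :: "complex \<Rightarrow> complex \<Rightarrow>\<^sub>L real" where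
    U': "\<And>z. z \<in> cball 0 1 \<Longrightarrow> (U has_derivative blinfun_apply (U' z)) (at z within cball 0 1)"
    using assms(2) unfolding C1_closed_disk_def by blast
  have contU: "continuous_on (cball 0 1) U"
    unfolding continuous_on_eq_continuous_within using U' has_derivative_continuous by blast
  obtain z0 where z0: "z0 \<in> cball 0 1" and z0max: "\<And>y. y \<in> cball 0 1 \<Longrightarrow> U y \<le> U z0"
  proof -
    have ne: "cball (0::complex) 1 \<noteq> {}" by (metis centre_in_cball zero_le_one empty_iff)
    from continuous_attains_sup[OF compact_cball ne contU] show ?thesis using that by blast
  qed
  define m where "m = U z0"
  show ?thesis
  proof (cases "m \<le> M")
    case True
    show ?thesis
    proof
      fix z :: complex assume z: "z \<in> ?S"
      have "u_of H z = U z" using Ueq[OF z] by simp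
      also have "\<dots> \<le> m" unfolding m_def by (rule z0max) (use z in auto)
      finally show "u_of H z \<le> M" using True by simp
    qed
  next
    case False
    then have mM: "M < m" by simp
    have z0S: "z0 \<in> ?S"
    proof (rule ccontr)
      assume "z0 \<notin> ?S"
      with z0 have "z0 \<in> sphere 0 1" by auto
      then have "U z0 \<le> M" using assms(3) by blast
      then show False using mM by (simp add: m_def)
    qed
    define A where "A w = w * deriv F w" for w
    define B where "B w = w * deriv A w" for w
    define C where "C w = w * deriv B w" for w
    have hA: "A holomorphic_on ?S" unfolding A_def
      by (intro holomorphic_on_mult holomorphic_deriv hF open_ball holomorphic_on_ident)
    have hB: "B holomorphic_on ?S" unfolding B_def
      by (intro holomorphic_on_mult holomorphic_deriv hA open_ball holomorphic_on_ident)
    have hC: "C holomorphic_on ?S" unfolding C_def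
      by (intro holomorphic_on_mult holomorphic_deriv hB open_ball holomorphic_on_ident)
    define ut where "ut w = Re (F w) + (1/2) * (1 - (cmod w)^2) * Re (A w)" for w
    have ut_le: "ut w \<le> m" if "w \<in> ?S" for w
    proof -
      have "ut w = U w" using uF[OF that] Ueq[OF that] by (simp add: ut_def A_def)
      also have "\<dots> \<le> m" using z0max[of w] that by (auto simp: m_def)
      finally show ?thesis .
    qed
    have ut0: "ut z0 = m" using uF[OF z0S] Ueq[OF z0S] by (simp add: ut_def A_def m_def)
    have Fd: "(F has_field_derivative deriv F w) (at w)" if "w \<in> ?S" for w
      by (rule holomorphic_derivI[OF hF open_ball that])
    have ReF: "Re (F w) \<le> m" if "w \<in> ?S" for w
      by (rule ray_bound[OF Fd ut_le[unfolded ut_def A_def] that])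
    show ?thesis
    proof (cases "Re (F z0) = m")
      case True
      have const: "F constant_on ?S"
      proof (rule ccontr)
        assume nc: "\<not> F constant_on ?S"
        have "open (F ` ?S)"
          by (rule open_mapping_thm[OF hF open_ball connected_ball open_ball order.refl nc])
        moreover have "F z0 \<in> F ` ?S" using z0S by blast
        ultimately obtain e where e: "e > 0" "ball (F z0) e \<subseteq> F ` ?S" by (meson openE)
        have "F z0 + of_real (e/2) \<in> ball (F z0) e" using e by (simp add: dist_norm)
        then have "F z0 + of_real (e/2) \<in> F ` ?S" using e(2) by (rule subsetD[rotated])
        then obtain w where w: "F z0 + of_real (e/2) = F w" "w \<in> ?S" by (rule imageE)
        have "Re (F w) = m + e/2" using w(1)[symmetric] True by simp
        then show False using ReF[OF w(2)] e by simp
      qed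
      then obtain c where c: "\<And>w. w \<in> ?S \<Longrightarrow> F w = c" unfolding constant_on_def by blast
      have dz: "deriv F w = 0" if "w \<in> ?S" for w
      proof -
        have "((\<lambda>_. c) has_field_derivative deriv F w) (at w)"
          by (rule has_field_derivative_transform_within_open[OF Fd[OF that] open_ball that]) (simp add: c)
        then show ?thesis using DERIV_const DERIV_unique by blast
      qed
      have "U w = m" if "w \<in> ?S" for w
      proof -
        have "U w = Re c" using uF[OF that] Ueq[OF that] c[OF that] dz[OF that] by simp
        moreover have "Re c = m" using True c[OF z0S] by simp
        ultimately show ?thesis by simp
      qed
      then have "m \<le> U 1"
        using continuous_ge_on_closure[of "ball 0 1" U 1 m] contU by (simp add: closure_ball)
      moreover have "U 1 \<le> M" using assms(3) by simp
      ultimately show ?thesis using mM by simp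
    next
      case False
      then have lt: "Re (F z0) < m" using ReF[OF z0S] by simp
      define r where "r = cmod z0"
      have r1: "r < 1" using z0S by (simp add: r_def)
      have alpha: "Re (A z0) > 0"
      proof -
        have "m = Re (F z0) + (1/2) * (1 - r^2) * Re (A z0)" using ut0 by (simp add: ut_def r_def)
        moreover have "1 - r^2 > 0" using r1 by (simp add: r_def power_less_one_iff)
        ultimately have "0 < (1/2) * (1 - r^2) * Re (A z0)" using lt by linarith
        moreover have "0 < (1/2) * (1 - r^2)" using \<open>1 - r^2 > 0\<close> by simp
        ultimately show ?thesis by (rule zero_less_mult_pos)
      qed
      have r0: "r > 0" using alpha by (auto simp: r_def A_def)
      define R where "R = r^2"
      have R: "0 < R" "R < 1" using r0 r1 by (auto simp: R_def power_less_one_iff)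
      define \<alpha> where "\<alpha> = Re (A z0)"
      define \<beta> where "\<beta> = Re (B z0)"
      define \<gamma> where "\<gamma> = Re (C z0)"
      define p where "p \<zeta> = exp \<zeta> * z0" for \<zeta>
      define \<Phi>0 where "\<Phi>0 \<zeta> = F (p \<zeta>)" for \<zeta>
      define \<Phi>1 where "\<Phi>1 \<zeta> = A (p \<zeta>)" for \<zeta>
      define \<Phi>2 where "\<Phi>2 \<zeta> = B (p \<zeta>)" for \<zeta>
      define \<Phi>3 where "\<Phi>3 \<zeta> = C (p \<zeta>)" for \<zeta>
      have d0: "(\<Phi>0 has_field_derivative \<Phi>1 \<zeta>) (at \<zeta>)" if "p \<zeta> \<in> ?S" for \<zeta>
        using comp_exp_deriv[OF hF that[unfolded p_def]] by (simp add: \<Phi>0_def[abs_def] \<Phi>1_def p_def A_def)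
      have d1: "(\<Phi>1 has_field_derivative \<Phi>2 \<zeta>) (at \<zeta>)" if "p \<zeta> \<in> ?S" for \<zeta>
        using comp_exp_deriv[OF hA that[unfolded p_def]] by (simp add: \<Phi>1_def[abs_def] \<Phi>2_def p_def B_def)
      have d2: "(\<Phi>2 has_field_derivative \<Phi>3 \<zeta>) (at \<zeta>)" if "p \<zeta> \<in> ?S" for \<zeta>
        using comp_exp_deriv[OF hB that[unfolded p_def]] by (simp add: \<Phi>2_def[abs_def] \<Phi>3_def p_def C_def)
      have p0: "p 0 = z0" by (simp add: p_def)
      have normr: "cmod (p (of_real x)) = exp x * r" for x
        by (simp add: p_def norm_mult r_def exp_of_real[symmetric] norm_exp_eq_Re del: exp_of_real)
      have normi: "cmod (p (\<i> * of_real y)) = r" for y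
        by (simp add: p_def norm_mult r_def norm_exp_eq_Re)
      define d where "d = - ln r"
      have d: "d > 0" using r0 r1 by (simp add: d_def)
      have inS1: "p (of_real x) \<in> ?S" if "\<bar>x\<bar> < d" for x
      proof -
        have "exp x < exp d" using that by simp
        also have "exp d = 1 / r" using r0 by (simp add: d_def exp_minus inverse_eq_divide)
        finally have "exp x * r < 1" using r0 by (simp add: field_simps)
        then show ?thesis using normr[of x] by simp
      qed
      have inS2: "p (\<i> * of_real y) \<in> ?S" for y using normi[of y] r1 by simp
      define k where "k x = (1/2) * (1 - (exp x)^2 * R)" for x :: real
      define k' where "k' x = - ((exp x)^2 * R)" for x :: real
      define k'' where "k'' x = - (2 * (exp x)^2 * R)" for x :: real
      have dk: "(k has_real_derivative k' x) (at x)" for x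
        unfolding k_def k'_def by (auto intro!: derivative_eq_intros simp: power2_eq_square)
      have dk': "(k' has_real_derivative k'' x) (at x)" for x
        unfolding k'_def k''_def by (auto intro!: derivative_eq_intros simp: power2_eq_square)
      define g1 where "g1 x = Re (\<Phi>0 (of_real x)) + k x * Re (\<Phi>1 (of_real x))" for x
      define g1' where "g1' x = Re (\<Phi>1 (of_real x)) + (k' x * Re (\<Phi>1 (of_real x)) + Re (\<Phi>2 (of_real x)) * k x)" for x
      have dg1: "(g1 has_real_derivative g1' x) (at x)" if "\<bar>x\<bar> < d" for x
        unfolding g1_def g1'_def
        by (rule DERIV_add[OF re_real_line[OF d0[OF inS1[OF that]]] DERIV_mult[OF dk re_real_line[OF d1[OF inS1[OF that]]]]])
      have "(g1' has_real_derivative (Re (\<Phi>2 (of_real 0)) + ((k'' 0 * Re (\<Phi>1 (of_real 0)) + Re (\<Phi>2 (of_real 0)) * k' 0)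
          + (Re (\<Phi>3 (of_real 0)) * k 0 + k' 0 * Re (\<Phi>2 (of_real 0)))))) (at 0)"
        unfolding g1'_def using inS1[of 0] d
        by (intro DERIV_add DERIV_mult re_real_line d0 d1 d2 dk dk') auto
      then have dg1': "(g1' has_real_derivative (\<beta> + ((- 2 * R * \<alpha> + \<beta> * (- R)) + (\<gamma> * ((1/2) * (1 - R)) + (- R) * \<beta>)))) (at 0)"
        by (simp add: k_def k'_def k''_def \<Phi>1_def \<Phi>2_def \<Phi>3_def p0 \<alpha>_def \<beta>_def \<gamma>_def)
      have g1max: "g1 x \<le> g1 0" if "\<bar>x\<bar> < d" for x
      proof -
        have "g1 x = ut (p (of_real x))"
          by (simp add: g1_def ut_def \<Phi>0_def \<Phi>1_def k_def normr power_mult_distrib R_def)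
        also have "\<dots> \<le> m" by (rule ut_le[OF inS1[OF that]])
        also have "m = g1 0" using ut0 by (simp add: g1_def ut_def \<Phi>0_def \<Phi>1_def k_def p0 R_def r_def)
        finally show ?thesis .
      qed
      from second_deriv_test[OF d dg1 dg1' g1max]
      have T1: "g1' 0 = 0" "\<beta> + ((- 2 * R * \<alpha> + \<beta> * (- R)) + (\<gamma> * ((1/2) * (1 - R)) + (- R) * \<beta>)) \<le> 0"
        by auto
      have g1'0: "\<alpha> + (- R * \<alpha> + \<beta> * ((1/2) * (1 - R))) = 0"
        using T1(1) by (simp add: g1'_def k_def k'_def \<Phi>1_def \<Phi>2_def p0 \<alpha>_def \<beta>_def)
      define c0 where "c0 = (1/2) * (1 - R)"
      define g2 where "g2 y = Re (\<Phi>0 (\<i> * of_real y)) + c0 * Re (\<Phi>1 (\<i> * of_real y))" for y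
      define g2' where "g2' y = Re (\<Phi>1 (\<i> * of_real y) * \<i>) + c0 * Re (\<Phi>2 (\<i> * of_real y) * \<i>)" for y
      have dg2: "(g2 has_real_derivative g2' y) (at y)" for y
        unfolding g2_def g2'_def
        by (intro DERIV_add DERIV_cmult re_imag_line d0 d1 inS2)
      have "(g2' has_real_derivative (Re (\<Phi>2 (\<i> * of_real 0) * \<i> * \<i>) + c0 * Re (\<Phi>3 (\<i> * of_real 0) * \<i> * \<i>))) (at 0)"
      proof -
        have h1: "((\<lambda>y. Re (\<Phi>1 (\<i> * of_real y) * \<i>)) has_real_derivative Re (\<Phi>2 (\<i> * of_real 0) * \<i> * \<i>)) (at 0)"
          using re_imag_line[OF DERIV_cmult_right[OF d1[OF inS2[of 0]]], of \<i>] by simp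
        have h2: "((\<lambda>y. Re (\<Phi>2 (\<i> * of_real y) * \<i>)) has_real_derivative Re (\<Phi>3 (\<i> * of_real 0) * \<i> * \<i>)) (at 0)"
          using re_imag_line[OF DERIV_cmult_right[OF d2[OF inS2[of 0]]], of \<i>] by simp
        show ?thesis unfolding g2'_def[abs_def] by (intro DERIV_add DERIV_cmult h1 h2)
      qed
      then have dg2': "(g2' has_real_derivative (- \<beta> - c0 * \<gamma>)) (at 0)"
        by (simp add: \<Phi>2_def \<Phi>3_def p0 \<beta>_def \<gamma>_def)
      have g2max: "g2 y \<le> g2 0" if "\<bar>y\<bar> < 1" for y
      proof -
        have "g2 y = ut (p (\<i> * of_real y))"
          by (simp add: g2_def ut_def \<Phi>0_def \<Phi>1_def c0_def normi R_def)
        also have "\<dots> \<le> m" by (rule ut_le[OF inS2])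
        also have "m = g2 0" using ut0 by (simp add: g2_def ut_def \<Phi>0_def \<Phi>1_def c0_def p0 R_def r_def)
        finally show ?thesis .
      qed
      from second_deriv_test[OF zero_less_one dg2 dg2' g2max]
      have T2: "- \<beta> - c0 * \<gamma> \<le> 0" by auto
      have e1: "(1 - R) * (2 * \<alpha> + \<beta>) = 2 * (\<alpha> + (- R * \<alpha> + \<beta> * ((1/2) * (1 - R))))"
        by (simp add: field_simps)
      have "(1 - R) * (2 * \<alpha> + \<beta>) = 0" using e1 g1'0 by simp
      then have b: "\<beta> = - 2 * \<alpha>" using R by simp
      have "0 < R * \<alpha>" using R alpha by (simp add: \<alpha>_def)
      moreover have "(\<beta> + ((- 2 * R * \<alpha> + \<beta> * (- R)) + (\<gamma> * ((1/2) * (1 - R)) + (- R) * \<beta>))) + (- \<beta> - c0 * \<gamma>)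
          = 2 * (R * \<alpha>)"
        by (simp add: b c0_def algebra_simps)
      ultimately show ?thesis using T1(2) T2 by linarith
    qed
  qed
qed

end
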